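(* Let $b_n = 3n^2+3n+1$ for $n \ge 0$ and $a_n = -(2n^4-n^3)$ for $n \ge 1$. Define sequences $\{A_n\}_{n\ge -1}$ and $\{B_n\}_{n\ge -1}$ by $A_{-1}=1$, $A_0=b_0$, $B_{-1}=0$, $B_0=1$, and for $n\ge 1$, $$A_n = b_n A_{n-1} + a_n A_{n-2},\qquad B_n = b_n B_{n-1} + a_n B_{n-2}.$$ Then $B_n \neq 0$ for all $n \ge 0$, and the generalized continued fraction $$b_0 + \cfrac{a_1}{b_1 + \cfrac{a_2}{b_2 + \cdots}} \;=\; 1 - \cfrac{2\cdot 1^4 - 1^3}{7 - \cfrac{2\cdot 2^4 - 2^3}{19 - \cfrac{2\cdot 3^4-3^3}{37 - \cdots}}}$$ converges to $\dfrac{8}{\pi^2}$, i.e. $\displaystyle\lim_{n\to\infty} \frac{A_n}{B_n} = \frac{8}{\pi^2}$.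
   Context: The value of a generalized continued fraction $b_0 + \cfrac{a_1}{b_1 + \cfrac{a_2}{b_2+\cdots}}$ is defined as the limit of its convergents $A_n/B_n$, where $A_n, B_n$ are the numerator and denominator sequences given by the recurrences above. Although placed in a conjecture environment, this identity is the paper's main result, which it proves. *)

theory Defs
  imports "HOL-Analysis.Analysis"
begin

definition cf_b :: "nat \<Rightarrow> int" where
  "cf_b n = 3 * int n ^ 2 + 3 * int n + 1"

definition cf_a :: "nat \<Rightarrow> int" where
  "cf_a n = - (2 * int n ^ 4 - int n ^ 3)"

text \<open>Index-shifted sequences: cfA k = A_{k-1}, cfB k = B_{k-1}; so cfA (n+1) = A_n.\<close>
fun cfA :: "nat \<Rightarrow> int" where
  "cfA 0 = 1"
| "cfA (Suc 0) = cf_b 0"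
| "cfA (Suc (Suc n)) = cf_b (Suc n) * cfA (Suc n) + cf_a (Suc n) * cfA n"

fun cfB :: "nat \<Rightarrow> int" where
  "cfB 0 = 0"
| "cfB (Suc 0) = 1"
| "cfB (Suc (Suc n)) = cf_b (Suc n) * cfB (Suc n) + cf_a (Suc n) * cfB n"

end

theory Submission
  imports Defs
begin

fun ca :: "nat \<Rightarrow> real" where
  "ca 0 = 1"
| "ca (Suc n) = ca n * (2 * real n + 2) / (2 * real n + 3)"

lemma ca_pos: "0 < ca n"
  by (induction n) auto

lemma ca_le1: "ca n \<le> 1"
proof (induction n)
  case 0 then show ?case by simp
next
  case (Suc n)
  have "ca n * (2 * real n + 2) / (2 * real n + 3) \<le> ca n"
    using ca_pos[of n] by (simp add: divide_simps)
  then show ?case using Suc.IH by (metis ca.simps(2) order_trans)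
qed

lemma summable_lin_geo:
  fixes q :: real
  assumes "0 \<le> q" "q < 1"
  shows "summable (\<lambda>n. (2 * real n + 1) * q ^ n)"
proof -
  have "summable (\<lambda>n. diffs (\<lambda>_. 1::real) n * q ^ n)"
  proof (rule termdiff_converges[where K=1])
    show "norm q < 1" using assms by simp
    fix x :: real assume "norm x < 1"
    then show "summable (\<lambda>n. 1 * x ^ n)" by (simp add: summable_geometric)
  qed
  then have "summable (\<lambda>n. 2 * (real (Suc n) * q ^ n))"
    by (intro summable_mult) (simp add: diffs_def)
  then show ?thesis
    by (rule summable_comparison_test'[where N=0]) (use assms in \<open>auto simp: algebra_simps\<close>)
qed

definition rr :: real where "rr = 4/5"

definition sS :: "real \<Rightarrow> real" where
  "sS = (\<lambda>x. \<Sum>n. ca n * x ^ (2*n+1))"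

definition dS :: "real \<Rightarrow> real" where
  "dS x = (\<Sum>n. (2 * real n + 1) * ca n * x ^ (2*n))"

definition FF :: "real \<Rightarrow> real" where
  "FF = (\<lambda>x. \<Sum>n. ca n * x ^ (2*n+2) / (2 * real n + 2))"

lemma in_S_abs: "x \<in> {-rr<..<rr} \<Longrightarrow> \<bar>x\<bar> < rr"
  by auto

lemma pow_bound: "\<bar>x\<bar> < rr \<Longrightarrow> \<bar>x\<bar> ^ (2*n) \<le> (rr^2) ^ n"
proof -
  assume "\<bar>x\<bar> < rr"
  then have "\<bar>x\<bar>^2 \<le> rr^2" by (intro power_mono) auto
  then have "(\<bar>x\<bar>^2)^n \<le> (rr^2)^n" by (rule power_mono) simp
  then show ?thesis by (simp add: power_mult)
qed

lemma cmul_le: "0 \<le> (a::real) \<Longrightarrow> a \<le> b \<Longrightarrow> 0 \<le> c \<Longrightarrow> c \<le> 1 \<Longrightarrow> c * a \<le> b"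
proof -
  assume h: "0 \<le> a" "a \<le> b" "0 \<le> c" "c \<le> 1"
  have "c * a \<le> 1 * a" by (rule mult_right_mono) (use h in auto)
  then show ?thesis using h by simp
qed

lemma rr_facts: "0 < rr" "rr < 1" "rr^2 < 1"
  by (auto simp: rr_def power2_eq_square)

lemma dS_deriv:
  assumes "x \<in> {-rr<..<rr}"
  shows "summable (\<lambda>n. ca n * x ^ (2*n+1))" "(sS has_field_derivative dS x) (at x)"
proof -
  have conv: "uniformly_convergent_on {-rr<..<rr} (\<lambda>n x. \<Sum>i<n. (2 * real i + 1) * ca i * x ^ (2*i))"
  proof (rule Weierstrass_m_test'[where M="\<lambda>n. (2 * real n + 1) * (rr^2) ^ n"])
    fix n and y :: real assume "y \<in> {-rr<..<rr}"
    then have "\<bar>y\<bar> ^ (2*n) \<le> (rr^2) ^ n" by (intro pow_bound) auto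
    then show "norm ((2 * real n + 1) * ca n * y ^ (2*n)) \<le> (2 * real n + 1) * (rr^2) ^ n"
      using ca_pos[of n] ca_le1[of n]
      by (auto simp: abs_mult power_abs intro!: mult_left_mono cmul_le)
  next
    show "summable (\<lambda>n. (2 * real n + 1) * (rr^2) ^ n)"
      using rr_facts by (intro summable_lin_geo) auto
  qed
  have D: "((\<lambda>y. ca n * y ^ (2*n+1)) has_field_derivative (2 * real n + 1) * ca n * y ^ (2*n)) (at y within {-rr<..<rr})" for n y
    by (rule derivative_eq_intros refl | simp)+
  note R = has_field_derivative_series'[OF convex_real_interval(8) D conv, of 0]
  have I: "x \<in> interior {-rr<..<rr}" using assms by simp
  show "summable (\<lambda>n. ca n * x ^ (2*n+1))" using R(1)[OF _ _ I] rr_facts by auto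
  show "(sS has_field_derivative dS x) (at x)" using R(2)[OF _ _ I] rr_facts
    by (auto simp: sS_def dS_def)
qed

lemma FF_deriv:
  assumes "x \<in> {-rr<..<rr}"
  shows "summable (\<lambda>n. ca n * x ^ (2*n+2) / (2 * real n + 2))" "(FF has_field_derivative sS x) (at x)"
proof -
  have conv: "uniformly_convergent_on {-rr<..<rr} (\<lambda>n x. \<Sum>i<n. ca i * x ^ (2*i+1))"
  proof (rule Weierstrass_m_test'[where M="\<lambda>n. (rr^2) ^ n"])
    fix n and y :: real assume y: "y \<in> {-rr<..<rr}"
    then have "\<bar>y\<bar> ^ (2*n) \<le> (rr^2) ^ n" by (intro pow_bound) auto
    moreover have "\<bar>y\<bar> \<le> 1" using y rr_facts by auto
    ultimately have "\<bar>y\<bar> ^ (2*n) * \<bar>y\<bar> \<le> (rr^2) ^ n"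
      by (metis cmul_le abs_ge_zero mult.commute zero_le_power)
    moreover have "norm (ca n * y ^ (2*n+1)) = ca n * (\<bar>y\<bar> ^ (2*n) * \<bar>y\<bar>)"
      using ca_pos[of n] by (simp add: abs_mult power_abs)
    ultimately show "norm (ca n * y ^ (2*n+1)) \<le> (rr^2) ^ n"
      using ca_pos[of n] ca_le1[of n] cmul_le[of "\<bar>y\<bar> ^ (2*n) * \<bar>y\<bar>" "(rr^2) ^ n" "ca n"]
      by auto
  next
    show "summable (\<lambda>n. (rr^2) ^ n)"
      using rr_facts by (intro summable_geometric) auto
  qed
  have D: "((\<lambda>y. ca n * y ^ (2*n+2) / (2 * real n + 2)) has_field_derivative ca n * y ^ (2*n+1)) (at y within {-rr<..<rr})" for n y
  proof -
    have "(2 * real n + 2) \<noteq> 0" by (simp add: add_nonneg_pos)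
    have "((\<lambda>y. ca n * y ^ (2*n+2) / (2 * real n + 2)) has_field_derivative ca n * (real (2*n+2) * y ^ (2*n+2 - Suc 0)) / (2 * real n + 2)) (at y within {-rr<..<rr})"
      by (intro DERIV_cdivide DERIV_cmult DERIV_pow)
    then show ?thesis
      by (rule DERIV_cong) (use \<open>(2 * real n + 2) \<noteq> 0\<close> in \<open>simp add: field_simps\<close>)
  qed
  note R = has_field_derivative_series'[OF convex_real_interval(8) D conv, of 0]
  have I: "x \<in> interior {-rr<..<rr}" using assms by simp
  show "summable (\<lambda>n. ca n * x ^ (2*n+2) / (2 * real n + 2))" using R(1)[OF _ _ I] rr_facts by auto
  show "(FF has_field_derivative sS x) (at x)" using R(2)[OF _ _ I] rr_facts
    by (auto simp: sS_def FF_def)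
qed

lemma dS_summable:
  assumes "\<bar>x\<bar> < rr"
  shows "summable (\<lambda>n. (2 * real n + 1) * ca n * x ^ (2*n))"
proof (rule summable_comparison_test'[where N=0])
  show "summable (\<lambda>n. (2 * real n + 1) * (rr^2) ^ n)"
    using rr_facts by (intro summable_lin_geo) auto
  fix n :: nat
  have "\<bar>x\<bar> ^ (2*n) \<le> (rr^2) ^ n" using assms by (intro pow_bound)
  then show "norm ((2 * real n + 1) * ca n * x ^ (2*n)) \<le> (2 * real n + 1) * (rr^2) ^ n"
    using ca_pos[of n] ca_le1[of n]
    by (auto simp: abs_mult power_abs intro!: mult_left_mono cmul_le)
qed

lemma ca_rec: "(2 * real n + 3) * ca (Suc n) = (2 * real n + 2) * ca n"
  by simp

lemma ode:
  assumes "x \<in> {-rr<..<rr}"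
  shows "(1 - x^2) * dS x - x * sS x = 1"
proof -
  define u where "u n = (2 * real n + 1) * ca n * x ^ (2*n)" for n
  have su: "summable u" unfolding u_def using assms by (intro dS_summable) auto
  have ss: "summable (\<lambda>n. ca n * x ^ (2*n+1))" using dS_deriv(1)[OF assms] .
  have key: "u (Suc n) = x^2 * u n + x * (ca n * x ^ (2*n+1))" for n
  proof -
    have "u (Suc n) = ((2 * real n + 3) * ca (Suc n)) * x ^ (2*n+2)"
      by (simp add: u_def algebra_simps)
    also have "\<dots> = (2 * real n + 2) * ca n * x ^ (2*n+2)" by (simp only: ca_rec)
    also have "\<dots> = x^2 * u n + x * (ca n * x ^ (2*n+1))"
      by (simp add: u_def algebra_simps power_add power2_eq_square)
    finally show ?thesis .
  qed
  have "(\<Sum>n. u (Suc n)) = suminf u - u 0" by (rule suminf_split_head[OF su])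
  moreover have "(\<Sum>n. u (Suc n)) = x^2 * suminf u + x * sS x"
    unfolding key sS_def
    using su ss by (simp add: suminf_add[symmetric] suminf_mult summable_mult)
  moreover have "u 0 = 1" by (simp add: u_def)
  moreover have "dS x = suminf u" by (simp add: dS_def u_def[abs_def])
  ultimately show ?thesis by (simp add: algebra_simps)
qed

lemma in_S_unit: "y \<in> {-rr<..<rr} \<Longrightarrow> -1 < y \<and> y < 1 \<and> 0 < 1 - y^2"
proof -
  assume "y \<in> {-rr<..<rr}"
  then have h: "\<bar>y\<bar> < 1" using rr_facts by auto
  then have "\<bar>y\<bar>^2 < 1^2" by (intro power_strict_mono) auto
  then show ?thesis using h by auto
qed

lemma sqrt_deriv:
  assumes "0 < 1 - y^2"
  shows "((\<lambda>y. sqrt (1 - y^2)) has_field_derivative (inverse (sqrt (1 - y^2)) / 2) * (0 - real 2 * y ^ (2 - Suc 0))) (at y)"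
  by (rule DERIV_chain2[OF DERIV_real_sqrt[OF assms] DERIV_diff[OF DERIV_const DERIV_pow]])

lemma sS_closed:
  assumes "x \<in> {-rr<..<rr}"
  shows "sS x * sqrt (1 - x^2) = arcsin x"
proof -
  define g where "g y = sS y * sqrt (1 - y^2) - arcsin y" for y
  have "g x = g 0"
  proof (rule DERIV_isconst3[of "-rr" rr x 0 g])
    show "-rr < rr" "x \<in> {-rr<..<rr}" "0 \<in> {-rr<..<rr}" using rr_facts assms by auto
    fix y assume y: "y \<in> {-rr<..<rr}"
    note u = in_S_unit[OF y]
    define w where "w = sqrt (1 - y^2)"
    have wpos: "0 < w" using u by (simp add: w_def)
    have w2: "w^2 = 1 - y^2" using u by (simp add: w_def)
    have D: "(g has_field_derivative dS y * w + (inverse w / 2 * (0 - real 2 * y ^ (2 - Suc 0))) * sS y - inverse (sqrt (1 - y\<^sup>2))) (at y)"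
      unfolding g_def[abs_def] w_def
      by (intro DERIV_diff DERIV_mult dS_deriv(2) sqrt_deriv DERIV_arcsin y) (use u in auto)
    have "dS y * w + (inverse w / 2 * (0 - real 2 * y ^ (2 - Suc 0))) * sS y - inverse (sqrt (1 - y\<^sup>2))
        = ((1 - y^2) * dS y - y * sS y - 1) / w"
      using wpos by (simp add: field_simps w_def[symmetric] flip: w2) (simp add: power2_eq_square algebra_simps)
    also have "\<dots> = 0" using ode[OF y] by simp
    finally show "(g has_field_derivative 0) (at y)" using D by simp
  qed
  moreover have "g 0 = 0" by (simp add: g_def sS_def)
  ultimately show ?thesis by (simp add: g_def)
qed

lemma FF_closed:
  assumes "x \<in> {-rr<..<rr}"
  shows "FF x = arcsin x ^ 2 / 2"
proof -
  define h where "h y = FF y - arcsin y ^ 2 / 2" for y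
  have "h x = h 0"
  proof (rule DERIV_isconst3[of "-rr" rr x 0 h])
    show "-rr < rr" "x \<in> {-rr<..<rr}" "0 \<in> {-rr<..<rr}" using rr_facts assms by auto
    fix y assume y: "y \<in> {-rr<..<rr}"
    note u = in_S_unit[OF y]
    have D: "(h has_field_derivative sS y - real 2 * arcsin y ^ (2 - Suc 0) * inverse (sqrt (1 - y\<^sup>2)) / 2) (at y)"
      unfolding h_def[abs_def]
      by (intro DERIV_diff DERIV_cdivide FF_deriv(2) DERIV_arcsin y DERIV_pow[THEN DERIV_chain2]) (use u in auto)
    have wpos: "0 < sqrt (1 - y^2)" using u by simp
    have "sS y = arcsin y / sqrt (1 - y^2)" using sS_closed[OF y] wpos by (simp add: field_simps)
    then have "sS y - real 2 * arcsin y ^ (2 - Suc 0) * inverse (sqrt (1 - y\<^sup>2)) / 2 = 0"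
      by (simp add: field_simps)
    then show "(h has_field_derivative 0) (at y)" using D by simp
  qed
  moreover have "h 0 = 0" by (simp add: h_def FF_def)
  ultimately show ?thesis by (simp add: h_def)
qed

definition tt :: "nat \<Rightarrow> real" where
  "tt k = ca k / (2 ^ k * (real k + 1))"

lemma tt_sums: "tt sums (pi^2 / 8)"
proof -
  define x :: real where "x = sqrt 2 / 2"
  have x2: "x^2 = 1/2" by (simp add: x_def power_divide)
  have "x < 4/5"
  proof -
    have "x^2 < (4/5)^2" unfolding x2 by (simp add: power2_eq_square)
    then show ?thesis by (rule power_less_imp_less_base) simp
  qed
  moreover have "0 \<le> x" by (simp add: x_def)
  ultimately have xS: "x \<in> {-rr<..<rr}" by (auto simp: rr_def)
  have ax: "arcsin x = pi / 4"
    unfolding x_def sin_45[symmetric] by (rule arcsin_sin) (use pi_gt_zero in linarith)+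
  have S1: "(\<lambda>n. ca n * x ^ (2*n+2) / (2 * real n + 2)) sums FF x"
    using FF_deriv(1)[OF xS] unfolding FF_def by (simp add: summable_sums)
  have F: "FF x = pi^2 / 32" using FF_closed[OF xS] ax by (simp add: power_divide)
  have T: "ca n * x ^ (2*n+2) / (2 * real n + 2) = tt n / 4" for n
  proof -
    have e: "2*n+2 = 2*(n+1)" by simp
    have "x ^ (2*n+2) = (x^2)^(n+1)" unfolding e by (rule power_mult)
    then have "x ^ (2*n+2) = (1/2)^(n+1)" by (simp only: x2)
    then have "ca n * x ^ (2*n+2) / (2 * real n + 2) = ca n * (1/2)^(n+1) / (2 * real n + 2)" by (simp only:)
    also have "\<dots> = tt n / 4" by (simp add: tt_def field_simps power_add)
    finally show ?thesis .
  qed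
  have "(\<lambda>n. ca n * x ^ (2*n+2) / (2 * real n + 2)) = (\<lambda>n. tt n / 4)" by (rule ext) (rule T)
  then have "(\<lambda>n. tt n / 4) sums (pi^2/32)" using S1 F by (simp only:)
  then have "(\<lambda>n. 4 * (tt n / 4)) sums (4 * (pi^2/32))" by (rule sums_mult)
  then show ?thesis by simp
qed

fun Ac :: "nat \<Rightarrow> int" where
  "Ac 0 = 1"
| "Ac (Suc n) = Ac n * (int n + 2) * (2 * int n + 3)"

lemma Ac_pos: "0 < Ac n"
  by (induction n) auto

lemma poly_id: "cf_b (Suc (Suc n)) * ((int n + 2) * (2 * int n + 3)) + cf_a (Suc (Suc n))
   = (int n + 2) * (2 * int n + 3) * (int n + 3) * (2 * int n + 5)"
  by (simp add: cf_a_def cf_b_def power2_eq_square power3_eq_cube power4_eq_xxxx algebra_simps)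

lemma cfA_closed: "cfA (Suc n) = Ac n \<and> cfA (Suc (Suc n)) = Ac (Suc n)"
proof (induction n)
  case 0 then show ?case by (simp add: cf_a_def cf_b_def)
next
  case (Suc n)
  have "cfA (Suc (Suc (Suc n))) = cf_b (Suc (Suc n)) * cfA (Suc (Suc n)) + cf_a (Suc (Suc n)) * cfA (Suc n)"
    by (rule cfA.simps(3))
  also have "\<dots> = cf_b (Suc (Suc n)) * Ac (Suc n) + cf_a (Suc (Suc n)) * Ac n"
    using Suc.IH by (simp only:)
  also have "\<dots> = Ac n * (cf_b (Suc (Suc n)) * ((int n + 2) * (2 * int n + 3)) + cf_a (Suc (Suc n)))"
    by (simp add: algebra_simps)
  also have "\<dots> = Ac (Suc (Suc n))" unfolding poly_id by (simp add: algebra_simps)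
  finally show ?case using Suc.IH by (simp only:)
qed

definition Sm :: "nat \<Rightarrow> real" where
  "Sm n = (\<Sum>k<Suc n. tt k)"

lemma E0: "(u::real) \<noteq> 0 \<Longrightarrow> v \<noteq> 0 \<Longrightarrow> w \<noteq> 0 \<Longrightarrow> p \<noteq> 0 \<Longrightarrow> u^3 * z * A * (c / (p * u))
     = A * u * z * w * v * (c * (2 * u) / v / (2 * p * w))"
  by (simp add: field_simps power3_eq_cube)

lemma key_tt:
  "- real_of_int (cf_a (Suc (Suc n))) * real_of_int (Ac n) * tt (Suc n)
     = real_of_int (Ac (Suc (Suc n))) * tt (Suc (Suc n))"
proof -
  define c where "c = ca (Suc n)"
  define p :: real where "p = 2 ^ Suc n"
  define A where "A = real_of_int (Ac n)"
  define N where "N = real n"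
  have N0: "0 \<le> N" by (simp add: N_def)
  have p0: "0 < p" by (simp add: p_def)
  have t1: "tt (Suc n) = c / (p * (N + 2))" by (simp add: tt_def c_def p_def N_def)
  have t2: "tt (Suc (Suc n)) = c * (2 * N + 4) / (2 * N + 5) / (2 * p * (N + 3))"
    by (simp add: tt_def c_def p_def N_def algebra_simps)
  have a2: "- real_of_int (cf_a (Suc (Suc n))) = (N + 2)^3 * (2 * N + 3)"
    by (simp add: cf_a_def N_def power2_eq_square power3_eq_cube power4_eq_xxxx algebra_simps)
  have A2: "real_of_int (Ac (Suc (Suc n))) = A * (N + 2) * (2 * N + 3) * (N + 3) * (2 * N + 5)"
    by (simp add: A_def N_def algebra_simps)
  have E: "(N + 2)^3 * (2 * N + 3) * A * (c / (p * (N + 2)))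
     = A * (N + 2) * (2 * N + 3) * (N + 3) * (2 * N + 5) * (c * (2 * N + 4) / (2 * N + 5) / (2 * p * (N + 3)))"
  proof -
    have "N + 2 \<noteq> 0" "N + 3 \<noteq> 0" "2 * N + 5 \<noteq> 0" "p \<noteq> 0" using N0 p0 by auto
    moreover have "2 * N + 4 = 2 * (N + 2)" by simp
    ultimately show ?thesis using E0[of "N + 2" "2 * N + 5" "N + 3" p "2 * N + 3" A c] by simp
  qed
  show ?thesis unfolding t1 t2 a2 A2 A_def[symmetric] using E .
qed

lemma alg_step:
  fixes a b A0 A1 S t1 t2 :: real
  assumes "- a * A0 * t1 = (b * A1 + a * A0) * t2"
  shows "b * (A1 * (S + t1)) + a * (A0 * S) = (b * A1 + a * A0) * ((S + t1) + t2)"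
proof -
  have "(b * A1 + a * A0) * ((S + t1) + t2) = b * (A1 * (S + t1)) + a * (A0 * S) + (a * A0 * t1 + (b * A1 + a * A0) * t2)"
    by (simp add: algebra_simps)
  also have "a * A0 * t1 + (b * A1 + a * A0) * t2 = 0" using assms by simp
  finally show ?thesis by simp
qed

lemma cfB_closed: "real_of_int (cfB (Suc n)) = real_of_int (Ac n) * Sm n \<and>
    real_of_int (cfB (Suc (Suc n))) = real_of_int (Ac (Suc n)) * Sm (Suc n)"
proof (induction n)
  case 0 then show ?case by (simp add: cf_a_def cf_b_def Sm_def tt_def)
next
  case (Suc n)
  have AA: "real_of_int (Ac (Suc (Suc n))) = real_of_int (cf_b (Suc (Suc n))) * real_of_int (Ac (Suc n))
       + real_of_int (cf_a (Suc (Suc n))) * real_of_int (Ac n)"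
  proof -
    have "Ac (Suc (Suc n)) = cf_b (Suc (Suc n)) * Ac (Suc n) + cf_a (Suc (Suc n)) * Ac n"
      using cfA.simps(3)[of "Suc n"] cfA_closed[of n] cfA_closed[of "Suc n"] by (simp only:)
    then show ?thesis by (metis of_int_add of_int_mult)
  qed
  have S1: "Sm (Suc n) = Sm n + tt (Suc n)" by (simp add: Sm_def)
  have S2: "Sm (Suc (Suc n)) = Sm (Suc n) + tt (Suc (Suc n))" by (simp add: Sm_def)
  have "real_of_int (cfB (Suc (Suc (Suc n)))) = real_of_int (cf_b (Suc (Suc n))) * (real_of_int (Ac (Suc n)) * Sm (Suc n))
      + real_of_int (cf_a (Suc (Suc n))) * (real_of_int (Ac n) * Sm n)"
    using Suc.IH cfB.simps(3)[of "Suc n"] by (simp only: of_int_add of_int_mult)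
  also have "\<dots> = real_of_int (Ac (Suc (Suc n))) * Sm (Suc (Suc n))"
    unfolding S2 S1 AA using key_tt[of n] unfolding AA by (intro alg_step) simp
  finally show ?case using Suc.IH by (simp only:)
qed

lemma tt_pos: "0 < tt k"
  using ca_pos[of k] by (simp add: tt_def)

lemma Sm_pos: "0 < Sm n"
  unfolding Sm_def using tt_pos by (intro sum_pos) auto

lemma Sm_lim: "Sm \<longlonglongrightarrow> pi^2 / 8"
proof -
  have "(\<lambda>n. \<Sum>i<n. tt i) \<longlonglongrightarrow> pi^2 / 8" using tt_sums by (simp add: sums_def)
  then have "(\<lambda>n. \<Sum>i<Suc n. tt i) \<longlonglongrightarrow> pi^2 / 8" by (rule LIMSEQ_Suc)
  then show ?thesis by (simp add: Sm_def[abs_def])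
qed

theorem mainTheorem1:
  shows "(\<forall>n. cfB (Suc n) \<noteq> 0) \<and>
         (\<lambda>n. real_of_int (cfA (Suc n)) / real_of_int (cfB (Suc n))) \<longlonglongrightarrow> 8 / pi\<^sup>2"
proof
  have B: "real_of_int (cfB (Suc n)) = real_of_int (Ac n) * Sm n" for n
    using cfB_closed[of n] by simp
  have Bpos: "0 < real_of_int (cfB (Suc n))" for n
    unfolding B using Ac_pos[of n] Sm_pos[of n] by simp
  show "\<forall>n. cfB (Suc n) \<noteq> 0"
  proof
    fix n show "cfB (Suc n) \<noteq> 0" using Bpos[of n] by auto
  qed
  have R: "real_of_int (cfA (Suc n)) / real_of_int (cfB (Suc n)) = 1 / Sm n" for n
    using cfA_closed[of n] B[of n] Ac_pos[of n] by simp
  have "(\<lambda>n. 1 / Sm n) \<longlonglongrightarrow> 1 / (pi^2 / 8)"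
    by (rule tendsto_divide[OF tendsto_const Sm_lim]) simp
  then show "(\<lambda>n. real_of_int (cfA (Suc n)) / real_of_int (cfB (Suc n))) \<longlonglongrightarrow> 8 / pi\<^sup>2"
    unfolding R by simp
qed

end
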